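(* Let $A$ be an integral quantum B-algebra, let $X,F\in U(A)$, let $F$ be a filter of $A$, and assume $1\in X\cap F$. Write $W=\mu_F(X)$. Then: (1) $W\cdot\mu_F(W\leadsto X)=W=\mu_F(W\to X)\cdot W$; (2) $\mu_F(W\to X)\to(W\to X)=W\to X$; (3) $\mu_F(W\leadsto X)\leadsto(W\leadsto X)=W\leadsto X$; (4) $(W\to X)\cdot\mu_F(W\to X)=W\to X$; (5) $\mu_F(W\leadsto X)\cdot(W\leadsto X)=W\leadsto X$; (6) $\mu_F(W\to X)=\mu_F(W\to X)\cdot\mu_F(W\to X)$, and $\mu_F(W\to X)$ is a filter of $A$ whenever $1\in\mu_F(W\to X)$; (7) $\mu_F(W\leadsto X)=\mu_F(W\leadsto X)\cdot\mu_F(W\leadsto X)$, and $\mu_F(W\leadsto X)$ is a filter of $A$ whenever $1\in\mu_F(W\leadsto X)$.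
   Context: A quantum B-algebra is a poset $(A,\le)$ with binary operations $\to,\leadsto$ such that for all $x,y,z\in A$: $y\to z\le(x\to y)\to(x\to z)$; $y\leadsto z\le(x\leadsto y)\leadsto(x\leadsto z)$; $y\le z$ implies $x\to y\le x\to z$; and $x\le y\to z$ iff $y\le x\leadsto z$. It is integral if it has a greatest element $1$ with $1\to x=1\leadsto x=x$ for all $x$. $U(A)$ denotes the set of all upper subsets of $A$ (including $\emptyset$), a quantale under inclusion with multiplication $X\cdot Y=\{a\in A\mid\exists y\in Y:\ y\to a\in X\}$. Its residuals are: for $Y,Z\in U(A)$, $Y\to Z$ is the largest $V\in U(A)$ with $V\cdot Y\subseteq Z$, and for $X,Z\in U(A)$, $X\leadsto Z$ is the largest $V\in U(A)$ with $X\cdot V\subseteq Z$. A filter of $A$ is a nonempty $F\in U(A)$ with $F\cdot F\subseteq F$. For $F,X\in U(A)$, $\mu_F(X)=F\cap X$. *)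

theory Defs
  imports Main
begin

text \<open>A quantum B-algebra on the carrier type 'a, with partial order le and
  residual operations imp (written \<rightarrow>) and limp (written \<leadsto>).\<close>
definition quantum_B_algebra ::
  "('a \<Rightarrow> 'a \<Rightarrow> bool) \<Rightarrow> ('a \<Rightarrow> 'a \<Rightarrow> 'a) \<Rightarrow> ('a \<Rightarrow> 'a \<Rightarrow> 'a) \<Rightarrow> bool" where
  "quantum_B_algebra le imp limp \<longleftrightarrow>
     (\<forall>x. le x x) \<and>
     (\<forall>x y. le x y \<and> le y x \<longrightarrow> x = y) \<and>
     (\<forall>x y z. le x y \<and> le y z \<longrightarrow> le x z) \<and>
     (\<forall>x y z. le (imp y z) (imp (imp x y) (imp x z))) \<and>
     (\<forall>x y z. le (limp y z) (limp (limp x y) (limp x z))) \<and>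
     (\<forall>x y z. le y z \<longrightarrow> le (imp x y) (imp x z)) \<and>
     (\<forall>x y z. le x (imp y z) \<longleftrightarrow> le y (limp x z))"

definition integral_qBa ::
  "('a \<Rightarrow> 'a \<Rightarrow> bool) \<Rightarrow> ('a \<Rightarrow> 'a \<Rightarrow> 'a) \<Rightarrow> ('a \<Rightarrow> 'a \<Rightarrow> 'a) \<Rightarrow> 'a \<Rightarrow> bool" where
  "integral_qBa le imp limp one \<longleftrightarrow>
     quantum_B_algebra le imp limp \<and>
     (\<forall>x. le x one) \<and> (\<forall>x. imp one x = x \<and> limp one x = x)"

definition upset :: "('a \<Rightarrow> 'a \<Rightarrow> bool) \<Rightarrow> 'a set \<Rightarrow> bool" where
  "upset le X \<longleftrightarrow> (\<forall>x y. x \<in> X \<longrightarrow> le x y \<longrightarrow> y \<in> X)"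

definition umult :: "('a \<Rightarrow> 'a \<Rightarrow> 'a) \<Rightarrow> 'a set \<Rightarrow> 'a set \<Rightarrow> 'a set" where
  "umult imp X Y = {a. \<exists>y\<in>Y. imp y a \<in> X}"

definition uimp :: "('a \<Rightarrow> 'a \<Rightarrow> bool) \<Rightarrow> ('a \<Rightarrow> 'a \<Rightarrow> 'a) \<Rightarrow> 'a set \<Rightarrow> 'a set \<Rightarrow> 'a set" where
  "uimp le imp Y Z = (GREATEST V. upset le V \<and> umult imp V Y \<subseteq> Z)"

definition ulimp :: "('a \<Rightarrow> 'a \<Rightarrow> bool) \<Rightarrow> ('a \<Rightarrow> 'a \<Rightarrow> 'a) \<Rightarrow> 'a set \<Rightarrow> 'a set \<Rightarrow> 'a set" where
  "ulimp le imp X Z = (GREATEST V. upset le V \<and> umult imp X V \<subseteq> Z)"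

definition qfilter :: "('a \<Rightarrow> 'a \<Rightarrow> bool) \<Rightarrow> ('a \<Rightarrow> 'a \<Rightarrow> 'a) \<Rightarrow> 'a set \<Rightarrow> bool" where
  "qfilter le imp F \<longleftrightarrow> F \<noteq> {} \<and> upset le F \<and> umult imp F F \<subseteq> F"

definition mu :: "'a set \<Rightarrow> 'a set \<Rightarrow> 'a set" where
  "mu F X = F \<inter> X"

end

theory Submission
  imports Defs
begin

locale iqba =
  fixes le :: "'a \<Rightarrow> 'a \<Rightarrow> bool" and imp limp :: "'a \<Rightarrow> 'a \<Rightarrow> 'a" and one :: 'a
  assumes I: "integral_qBa le imp limp one"
begin

lemma refl: "le x x" using I unfolding integral_qBa_def quantum_B_algebra_def by blast
lemma antisym: "le x y \<Longrightarrow> le y x \<Longrightarrow> x = y" using I unfolding integral_qBa_def quantum_B_algebra_def by blast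
lemma trans: "le x y \<Longrightarrow> le y z \<Longrightarrow> le x z" using I unfolding integral_qBa_def quantum_B_algebra_def by blast
lemma ax1: "le (imp y z) (imp (imp x y) (imp x z))" using I unfolding integral_qBa_def quantum_B_algebra_def by blast
lemma ax2: "le (limp y z) (limp (limp x y) (limp x z))" using I unfolding integral_qBa_def quantum_B_algebra_def by blast
lemma mono: "le y z \<Longrightarrow> le (imp x y) (imp x z)" using I unfolding integral_qBa_def quantum_B_algebra_def by blast
lemma res: "le x (imp y z) \<longleftrightarrow> le y (limp x z)" using I unfolding integral_qBa_def quantum_B_algebra_def by blast
lemma top: "le x one" using I unfolding integral_qBa_def by blast
lemma one_imp: "imp one x = x" using I unfolding integral_qBa_def by blast
lemma one_limp: "limp one x = x" using I unfolding integral_qBa_def by blast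

lemma unitl: "le z (limp (imp z a) a)"
  using res refl by blast
lemma unitr: "le x (imp (limp x a) a)"
  using res refl by blast

lemma swap: "le (limp x (imp z a)) (imp z (limp x a))"
proof -
  have "le z (limp (limp x (imp z a)) (limp x a))"
    using trans[OF unitl ax2] .
  thus ?thesis using res by blast
qed

lemma imp_one_iff: "imp y a = one \<longleftrightarrow> le y a"
proof
  assume "imp y a = one"
  then have "le one (imp y a)" using refl by simp
  then show "le y a" using res one_limp by metis
next
  assume "le y a"
  then have "le one (imp y a)" using res one_limp by metis
  then show "imp y a = one" using antisym top by blast
qed

lemma upset_mult: "upset le X \<Longrightarrow> upset le (umult imp X Y)"
  unfolding upset_def umult_def using mono by blast

lemma mult_mono: "X \<subseteq> X' \<Longrightarrow> Y \<subseteq> Y' \<Longrightarrow> umult imp X Y \<subseteq> umult imp X' Y'"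
  unfolding umult_def by blast

lemma mult_one_r: "umult imp X {one} = X"
  unfolding umult_def using one_imp by auto

lemma mult_one_l:
  assumes Y: "upset le Y" shows "umult imp {one} Y = Y"
proof
  show "umult imp {one} Y \<subseteq> Y" using Y imp_one_iff unfolding umult_def upset_def by auto
  show "Y \<subseteq> umult imp {one} Y" using imp_one_iff refl unfolding umult_def by blast
qed

lemma assoc1: "upset le X \<Longrightarrow> umult imp X (umult imp Y Z) \<subseteq> umult imp (umult imp X Y) Z"
proof
  fix a assume X: "upset le X" and "a \<in> umult imp X (umult imp Y Z)"
  then obtain v z where z: "z \<in> Z" "imp z v \<in> Y" "imp v a \<in> X" unfolding umult_def by blast
  have "imp (imp z v) (imp z a) \<in> X" using X z(3) ax1 unfolding upset_def by blast
  then show "a \<in> umult imp (umult imp X Y) Z" using z unfolding umult_def by blast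
qed

lemma assoc2: "upset le X \<Longrightarrow> upset le Y \<Longrightarrow> umult imp (umult imp X Y) Z \<subseteq> umult imp X (umult imp Y Z)"
proof
  fix a assume X: "upset le X" and Y: "upset le Y" and "a \<in> umult imp (umult imp X Y) Z"
  then obtain y z where z: "z \<in> Z" "y \<in> Y" "imp y (imp z a) \<in> X" unfolding umult_def by blast
  define x where "x = imp y (imp z a)"
  define v where "v = limp x a"
  have "le x (imp v a)" unfolding v_def by (rule unitr)
  then have 1: "imp v a \<in> X" using X z(3) unfolding upset_def x_def by blast
  have "le y (limp x (imp z a))" using res refl x_def by blast
  then have "le y (imp z v)" unfolding v_def using swap trans by blast
  then have "imp z v \<in> Y" using Y z(2) unfolding upset_def by blast
  then show "a \<in> umult imp X (umult imp Y Z)" using z 1 unfolding umult_def by blast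
qed

lemma assoc: "upset le X \<Longrightarrow> upset le Y \<Longrightarrow> umult imp (umult imp X Y) Z = umult imp X (umult imp Y Z)"
  using assoc1 assoc2 by blast

lemma uimp_eq: "uimp le imp Y Z = \<Union>{V. upset le V \<and> umult imp V Y \<subseteq> Z}"
  unfolding uimp_def
proof (rule Greatest_equality)
  show "upset le (\<Union>{V. upset le V \<and> umult imp V Y \<subseteq> Z}) \<and> umult imp (\<Union>{V. upset le V \<and> umult imp V Y \<subseteq> Z}) Y \<subseteq> Z"
    unfolding upset_def umult_def by blast
qed blast

lemma ulimp_eq: "ulimp le imp Y Z = \<Union>{V. upset le V \<and> umult imp Y V \<subseteq> Z}"
  unfolding ulimp_def
proof (rule Greatest_equality)
  show "upset le (\<Union>{V. upset le V \<and> umult imp Y V \<subseteq> Z}) \<and> umult imp Y (\<Union>{V. upset le V \<and> umult imp Y V \<subseteq> Z}) \<subseteq> Z"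
    unfolding upset_def umult_def by blast
qed blast

lemma uimp_upset: "upset le (uimp le imp Y Z)"
  unfolding uimp_eq upset_def by blast
lemma uimp_mult: "umult imp (uimp le imp Y Z) Y \<subseteq> Z"
  unfolding uimp_eq umult_def by blast
lemma uimp_ge: "upset le V \<Longrightarrow> umult imp V Y \<subseteq> Z \<Longrightarrow> V \<subseteq> uimp le imp Y Z"
  unfolding uimp_eq by blast
lemma ulimp_upset: "upset le (ulimp le imp Y Z)"
  unfolding ulimp_eq upset_def by blast
lemma ulimp_mult: "umult imp Y (ulimp le imp Y Z) \<subseteq> Z"
  unfolding ulimp_eq umult_def by blast
lemma ulimp_ge: "upset le V \<Longrightarrow> umult imp Y V \<subseteq> Z \<Longrightarrow> V \<subseteq> ulimp le imp Y Z"
  unfolding ulimp_eq by blast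

end

theorem proposition3p3:
  fixes le :: "'a \<Rightarrow> 'a \<Rightarrow> bool" and imp limp :: "'a \<Rightarrow> 'a \<Rightarrow> 'a"
    and one :: 'a and X F W :: "'a set"
  assumes "integral_qBa le imp limp one"
    and "upset le X" and "upset le F"
    and "qfilter le imp F"
    and "one \<in> X \<inter> F"
    and W_def: "W = mu F X"
  shows "(umult imp W (mu F (ulimp le imp W X)) = W
       \<and> W = umult imp (mu F (uimp le imp W X)) W)
    \<and> (uimp le imp (mu F (uimp le imp W X)) (uimp le imp W X) = uimp le imp W X)
    \<and> (ulimp le imp (mu F (ulimp le imp W X)) (ulimp le imp W X) = ulimp le imp W X)
    \<and> (umult imp (uimp le imp W X) (mu F (uimp le imp W X)) = uimp le imp W X)
    \<and> (umult imp (mu F (ulimp le imp W X)) (ulimp le imp W X) = ulimp le imp W X)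
    \<and> (mu F (uimp le imp W X) = umult imp (mu F (uimp le imp W X)) (mu F (uimp le imp W X))
       \<and> (one \<in> mu F (uimp le imp W X) \<longrightarrow> qfilter le imp (mu F (uimp le imp W X))))
    \<and> (mu F (ulimp le imp W X) = umult imp (mu F (ulimp le imp W X)) (mu F (ulimp le imp W X))
       \<and> (one \<in> mu F (ulimp le imp W X) \<longrightarrow> qfilter le imp (mu F (ulimp le imp W X))))"
proof -
  interpret iqba le imp limp one by (rule iqba.intro) (rule assms(1))
  define P where "P = uimp le imp W X"
  define Q where "Q = ulimp le imp W X"
  define M where "M = F \<inter> P"
  define N where "N = F \<inter> Q"
  have FF: "umult imp F F \<subseteq> F" using assms(4) unfolding qfilter_def by blast
  have WF: "W \<subseteq> F" and WX: "W \<subseteq> X" using W_def unfolding mu_def by auto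
  have Wup: "upset le W" using assms(2,3) W_def unfolding mu_def upset_def by blast
  have Pup: "upset le P" unfolding P_def by (rule uimp_upset)
  have Qup: "upset le Q" unfolding Q_def by (rule ulimp_upset)
  have Mup: "upset le M" using Pup assms(3) unfolding M_def upset_def by blast
  have Nup: "upset le N" using Qup assms(3) unfolding N_def upset_def by blast
  have oneup: "upset le {one}" unfolding upset_def using top antisym by blast
  have PW: "umult imp P W \<subseteq> X" unfolding P_def by (rule uimp_mult)
  have WQ: "umult imp W Q \<subseteq> X" unfolding Q_def by (rule ulimp_mult)
  have oneP: "one \<in> P" unfolding P_def using uimp_ge[OF oneup] mult_one_l[OF Wup] WX by blast
  have oneQ: "one \<in> Q" unfolding Q_def using ulimp_ge[OF oneup] mult_one_r WX by blast
  have oneM: "one \<in> M" using oneP assms(5) M_def by blast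
  have oneN: "one \<in> N" using oneQ assms(5) N_def by blast
  have WN: "umult imp W N = W"
  proof
    have "umult imp W N \<subseteq> umult imp F F" using WF N_def mult_mono by blast
    moreover have "umult imp W N \<subseteq> X" using WQ N_def mult_mono by blast
    ultimately show "umult imp W N \<subseteq> W" using FF W_def unfolding mu_def by blast
    show "W \<subseteq> umult imp W N" using mult_mono[of W W "{one}" N] mult_one_r oneN by auto
  qed
  have MW: "umult imp M W = W"
  proof
    have "umult imp M W \<subseteq> umult imp F F" using WF M_def mult_mono by blast
    moreover have "umult imp M W \<subseteq> X" using PW M_def mult_mono by blast
    ultimately show "umult imp M W \<subseteq> W" using FF W_def unfolding mu_def by blast
    show "W \<subseteq> umult imp M W" using mult_mono[of "{one}" M W W] mult_one_l[OF Wup] oneM by auto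
  qed
  have PM: "umult imp P M = P"
  proof
    have "umult imp (umult imp P M) W \<subseteq> X" using assoc[OF Pup Mup] MW PW by simp
    then show "umult imp P M \<subseteq> P" unfolding P_def using uimp_ge upset_mult[OF Pup] P_def by blast
    show "P \<subseteq> umult imp P M" using mult_mono[of P P "{one}" M] mult_one_r oneM by auto
  qed
  have NQ: "umult imp N Q = Q"
  proof
    have "umult imp W (umult imp N Q) \<subseteq> X" using assoc[OF Wup Nup, symmetric] WN WQ by simp
    then show "umult imp N Q \<subseteq> Q" unfolding Q_def using ulimp_ge upset_mult[OF Nup] Q_def by blast
    show "Q \<subseteq> umult imp N Q" using mult_mono[of "{one}" N Q Q] mult_one_l[OF Qup] oneN by auto
  qed
  have MP: "uimp le imp M P = P"
  proof
    show "P \<subseteq> uimp le imp M P" using uimp_ge[OF Pup] PM by blast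
    have "uimp le imp M P = umult imp (uimp le imp M P) {one}" using mult_one_r by simp
    also have "\<dots> \<subseteq> umult imp (uimp le imp M P) M" using mult_mono oneM by blast
    also have "\<dots> \<subseteq> P" by (rule uimp_mult)
    finally show "uimp le imp M P \<subseteq> P" .
  qed
  have NQ2: "ulimp le imp N Q = Q"
  proof
    show "Q \<subseteq> ulimp le imp N Q" using ulimp_ge[OF Qup] NQ by blast
    have "ulimp le imp N Q = umult imp {one} (ulimp le imp N Q)" using mult_one_l[OF ulimp_upset] by simp
    also have "\<dots> \<subseteq> umult imp N (ulimp le imp N Q)" using mult_mono oneN by blast
    also have "\<dots> \<subseteq> Q" by (rule ulimp_mult)
    finally show "ulimp le imp N Q \<subseteq> Q" .
  qed
  have MM: "M = umult imp M M"
  proof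
    show "M \<subseteq> umult imp M M" using mult_mono[of M M "{one}" M] mult_one_r oneM by auto
    have "umult imp M M \<subseteq> umult imp F F" using M_def mult_mono by blast
    moreover have "umult imp M M \<subseteq> umult imp P M" using M_def mult_mono by blast
    ultimately show "umult imp M M \<subseteq> M" using FF PM M_def by blast
  qed
  have NN: "N = umult imp N N"
  proof
    show "N \<subseteq> umult imp N N" using mult_mono[of N N "{one}" N] mult_one_r oneN by auto
    have "umult imp N N \<subseteq> umult imp F F" using N_def mult_mono by blast
    moreover have "umult imp N N \<subseteq> umult imp N Q" using N_def mult_mono by blast
    ultimately show "umult imp N N \<subseteq> N" using FF NQ N_def by blast
  qed
  have fM: "qfilter le imp M" unfolding qfilter_def using oneM Mup MM by blast
  have fN: "qfilter le imp N" unfolding qfilter_def using oneN Nup NN by blast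
  show ?thesis
    using WN MW MP NQ2 PM NQ MM NN fM fN
    unfolding mu_def P_def[symmetric] Q_def[symmetric] M_def[symmetric] N_def[symmetric]
    by simp
qed

end
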